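(* Let $\mathbb{X}\subseteq\mathbb{P}^2$ be a $\Bbbk$-configuration of type $(d_1,\dots,d_s)$ with $s\ge2$. Then there exist subsets $\mathbb{X}_1,\dots,\mathbb{X}_s$ and lines $\mathbb{L}_1,\dots,\mathbb{L}_s$ defining $\mathbb{X}$ as a $\Bbbk$-configuration of type $(d_1,\dots,d_s)$, and an integer $r$ with $1\le r\le s$, such that $|\mathbb{L}_{s-j}\cap\mathbb{X}|=d_s$ for all $0\le j\le r-1$ and $|\mathbb{L}_{s-j}\cap\mathbb{X}|<d_s$ for all $r\le j\le s-1$.
   Context: $\Bbbk$ is an algebraically closed field. A $\Bbbk$-configuration of type $(d_1,\dots,d_s)$ is a finite set $\mathbb{X}\subseteq\mathbb{P}^2$ for which there exist integers $1\le d_1<\cdots<d_s$, subsets $\mathbb{X}_1,\dots,\mathbb{X}_s$ of $\mathbb{X}$ and distinct lines $\mathbb{L}_1,\dots,\mathbb{L}_s\subseteq\mathbb{P}^2$ such that (1) $\mathbb{X}=\bigcup_{i=1}^s\mathbb{X}_i$; (2) $|\mathbb{X}_i|=d_i$ and $\mathbb{X}_i\subseteq\mathbb{L}_i$ for each $i$; (3) for $1<i\le s$, $\mathbb{L}_i$ contains no point of $\mathbb{X}_j$ for any $j<i$. We say $\mathbb{X}$ is defined by these subsets and lines; such defining data need not be unique. *)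

theory Defs
  imports "HOL-Computational_Algebra.Polynomial"
begin

definition alg_closed :: "'k::field itself \<Rightarrow> bool" where
  "alg_closed _ \<longleftrightarrow> (\<forall>p :: 'k poly. degree p \<ge> 1 \<longrightarrow> (\<exists>x. poly p x = 0))"

type_synonym 'k vec3 = "'k \<times> 'k \<times> 'k"

definition sc3 :: "'k::field \<Rightarrow> 'k vec3 \<Rightarrow> 'k vec3" where
  "sc3 c v = (c * fst v, c * fst (snd v), c * snd (snd v))"

definition proj_class :: "'k::field vec3 \<Rightarrow> 'k vec3 set" where
  "proj_class v = {sc3 c v | c. c \<noteq> 0}"

typedef (overloaded) ('k::field) ppoint = "{S :: 'k vec3 set. \<exists>v. v \<noteq> (0,0,0) \<and> S = proj_class v}"
  by (rule exI[of _ "proj_class (1,0,0)"]) (rule CollectI, rule exI[of _ "(1,0,0)"], simp)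

definition dot3 :: "'k::field vec3 \<Rightarrow> 'k vec3 \<Rightarrow> 'k" where
  "dot3 a v = fst a * fst v + fst (snd a) * fst (snd v) + snd (snd a) * snd (snd v)"

definition is_line :: "'k::field ppoint set \<Rightarrow> bool" where
  "is_line L \<longleftrightarrow> (\<exists>a. a \<noteq> (0,0,0) \<and> L = {P. \<exists>v \<in> Rep_ppoint P. dot3 a v = 0})"

definition config_type :: "(nat \<Rightarrow> nat) \<Rightarrow> nat \<Rightarrow> bool" where
  "config_type d s \<longleftrightarrow> 1 \<le> d 1 \<and> (\<forall>i j. 1 \<le> i \<longrightarrow> i < j \<longrightarrow> j \<le> s \<longrightarrow> d i < d j)"

definition defines_config ::
  "'k::field ppoint set \<Rightarrow> (nat \<Rightarrow> nat) \<Rightarrow> nat \<Rightarrow> (nat \<Rightarrow> 'k ppoint set) \<Rightarrow> (nat \<Rightarrow> 'k ppoint set) \<Rightarrow> bool" where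
  "defines_config X d s Xs Ls \<longleftrightarrow>
     config_type d s \<and>
     X = (\<Union>i\<in>{1..s}. Xs i) \<and>
     (\<forall>i\<in>{1..s}. is_line (Ls i) \<and> Xs i \<subseteq> X \<and> finite (Xs i) \<and> card (Xs i) = d i \<and> Xs i \<subseteq> Ls i) \<and>
     inj_on Ls {1..s} \<and>
     (\<forall>i\<in>{1..s}. \<forall>j\<in>{1..s}. j < i \<longrightarrow> Ls i \<inter> Xs j = {})"

definition k_configuration :: "'k::field ppoint set \<Rightarrow> (nat \<Rightarrow> nat) \<Rightarrow> nat \<Rightarrow> bool" where
  "k_configuration X d s \<longleftrightarrow> finite X \<and> (\<exists>Xs Ls. defines_config X d s Xs Ls)"

end

theory Submission imports Defs begin

definition cross3 :: "'k::field vec3 \<Rightarrow> 'k vec3 \<Rightarrow> 'k vec3" where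
 "cross3 u z = (fst (snd u) * snd (snd z) - snd (snd u) * fst (snd z),
                snd (snd u) * fst z - fst u * snd (snd z),
                fst u * fst (snd z) - fst (snd u) * fst z)"

lemma cross_zero:
  fixes u z :: "'k::field vec3"
  assumes "u \<noteq> (0,0,0)" "cross3 u z = (0,0,0)"
  shows "\<exists>c. z = sc3 c u"
proof -
  obtain u1 u2 u3 where u: "u = (u1,u2,u3)" by (cases u) auto
  obtain z1 z2 z3 where z: "z = (z1,z2,z3)" by (cases z) auto
  have e1: "u2 * z3 = u3 * z2" and e2: "u3 * z1 = u1 * z3" and e3: "u1 * z2 = u2 * z1"
    using assms(2) by (auto simp: u z cross3_def)
  show ?thesis
  proof (cases "u1 = 0")
    case False
    show ?thesis
      by (rule exI[of _ "z1/u1"]) (use False e2 e3 in \<open>auto simp: u z sc3_def field_simps\<close>)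
  next
    case u1: True
    show ?thesis
    proof (cases "u2 = 0")
      case False
      show ?thesis
        by (rule exI[of _ "z2/u2"]) (use False u1 e1 e3 in \<open>auto simp: u z sc3_def field_simps\<close>)
    next
      case u2: True
      then have "u3 \<noteq> 0" using u1 assms(1) u by auto
      then show ?thesis
        by (intro exI[of _ "z3/u3"]) (use u1 u2 e1 e2 in \<open>auto simp: u z sc3_def field_simps\<close>)
    qed
  qed
qed

lemma cross_triple:
  fixes v a b :: "'k::field vec3"
  assumes "dot3 a v = 0" "dot3 b v = 0"
  shows "cross3 (cross3 a b) v = (0,0,0)"
proof -
  obtain u1 u2 u3 where u: "a = (u1,u2,u3)" by (cases a) auto
  obtain z1 z2 z3 where z: "b = (z1,z2,z3)" by (cases b) auto
  obtain v1 v2 v3 where v: "v = (v1,v2,v3)" by (cases v) auto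
  have h1: "u1*v1 + u2*v2 + u3*v3 = 0" and h2: "z1*v1+z2*v2+z3*v3 = 0"
    using assms by (auto simp: u z v dot3_def)
    have a1: "u2*v2 + u3*v3 = -(u1*v1)" using h1 by (simp add: eq_neg_iff_add_eq_0 algebra_simps)
  have c: "(u3 * z1 - u1 * z3) * v3 - (u1 * z2 - u2 * z1) * v2 = 0 \<and>
    (u1 * z2 - u2 * z1) * v1 - (u2 * z3 - u3 * z2) * v3 = 0 \<and>
    (u2 * z3 - u3 * z2) * v2 - (u3 * z1 - u1 * z3) * v1 = 0"
  proof (intro conjI)
    have b1: "v2*z2 + v3*z3 = -(v1*z1)" using h2 by (simp add: eq_neg_iff_add_eq_0 algebra_simps)
    have a2: "u1*v1 + u3*v3 = -(u2*v2)" using h1 by (simp add: eq_neg_iff_add_eq_0 algebra_simps)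
    have b2: "v1*z1 + v3*z3 = -(v2*z2)" using h2 by (simp add: eq_neg_iff_add_eq_0 algebra_simps)
    have a3: "u1*v1 + u2*v2 = -(u3*v3)" using h1 by (simp add: eq_neg_iff_add_eq_0 algebra_simps)
    have b3: "v1*z1 + v2*z2 = -(v3*z3)" using h2 by (simp add: eq_neg_iff_add_eq_0 algebra_simps)
    have "(u3 * z1 - u1 * z3) * v3 - (u1 * z2 - u2 * z1) * v2 = z1*(u2*v2 + u3*v3) - u1*(v2*z2 + v3*z3)"
      by (simp add: algebra_simps)
    also have "\<dots> = 0" by (simp only: a1 b1) (simp add: algebra_simps)
    finally show "(u3 * z1 - u1 * z3) * v3 - (u1 * z2 - u2 * z1) * v2 = 0" .
    have "(u1 * z2 - u2 * z1) * v1 - (u2 * z3 - u3 * z2) * v3 = z2*(u1*v1 + u3*v3) - u2*(v1*z1 + v3*z3)"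
      by (simp add: algebra_simps)
    also have "\<dots> = 0" by (simp only: a2 b2) (simp add: algebra_simps)
    finally show "(u1 * z2 - u2 * z1) * v1 - (u2 * z3 - u3 * z2) * v3 = 0" .
    have "(u2 * z3 - u3 * z2) * v2 - (u3 * z1 - u1 * z3) * v1 = z3*(u1*v1 + u2*v2) - u3*(v1*z1 + v2*z2)"
      by (simp add: algebra_simps)
    also have "\<dots> = 0" by (simp only: a3 b3) (simp add: algebra_simps)
    finally show "(u2 * z3 - u3 * z2) * v2 - (u3 * z1 - u1 * z3) * v1 = 0" .
  qed
  show ?thesis unfolding cross3_def u z v using c by (simp only: fst_conv snd_conv)
qed

lemma sc3_sc3: "sc3 d (sc3 c v) = sc3 (d*c) v"
  by (simp add: sc3_def mult.assoc)

lemma proj_class_sc3: "c \<noteq> 0 \<Longrightarrow> proj_class (sc3 c v) = proj_class (v::'k::field vec3)"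
proof -
  assume c: "c \<noteq> 0"
  show ?thesis unfolding proj_class_def
  proof (intro set_eqI iffI)
    fix x assume "x \<in> {sc3 d (sc3 c v) |d. d \<noteq> 0}"
    then obtain d where "d \<noteq> 0" "x = sc3 (d*c) v" by (auto simp only: sc3_sc3)
    moreover have "d*c \<noteq> 0" using c \<open>d \<noteq> 0\<close> by simp
    ultimately show "x \<in> {sc3 d v |d. d \<noteq> 0}" by blast
  next
    fix x assume "x \<in> {sc3 d v |d. d \<noteq> 0}"
    then obtain d where d: "d \<noteq> 0" "x = sc3 d v" by blast
    then have "x = sc3 (d/c) (sc3 c v)" using c by (simp add: sc3_sc3)
    moreover have "d/c \<noteq> 0" using c d by simp
    ultimately show "x \<in> {sc3 d (sc3 c v) |d. d \<noteq> 0}" by blast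
  qed
qed

lemma dot3_sc3: "dot3 a (sc3 c v) = c * dot3 a (v::'k::field vec3)"
  "dot3 (sc3 c a) v = c * dot3 a (v::'k::field vec3)"
  by (auto simp: dot3_def sc3_def algebra_simps)

lemma sc3_zero: "sc3 c v = (0,0,0) \<longleftrightarrow> c = 0 \<or> v = (0,0,0)"
  by (cases v) (auto simp: sc3_def)

lemma mem_line:
  assumes "Rep_ppoint P = proj_class v"
  shows "(\<exists>w \<in> Rep_ppoint P. dot3 a w = 0) \<longleftrightarrow> dot3 a v = 0"
proof
  assume "\<exists>w \<in> Rep_ppoint P. dot3 a w = 0"
  then obtain c where "c \<noteq> 0" "dot3 a (sc3 c v) = 0" using assms by (auto simp: proj_class_def)
  then show "dot3 a v = 0" by (simp add: dot3_sc3)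
next
  assume "dot3 a v = 0"
  moreover have "sc3 1 v = v" by (simp add: sc3_def)
  ultimately have "v \<in> Rep_ppoint P" "dot3 a v = 0" using assms by (auto simp: proj_class_def intro!: exI[of _ 1])
  then show "\<exists>w \<in> Rep_ppoint P. dot3 a w = 0" by blast
qed

lemma lines_meet:
  fixes L M :: "'k::field ppoint set"
  assumes "is_line L" "is_line M" "L \<noteq> M" "P \<in> L" "P \<in> M" "Q \<in> L" "Q \<in> M"
  shows "P = Q"
proof -
  obtain a where a: "a \<noteq> (0,0,0)" "L = {P. \<exists>v \<in> Rep_ppoint P. dot3 a v = 0}"
    using assms(1) unfolding is_line_def by blast
  obtain b where b: "b \<noteq> (0,0,0)" "M = {P. \<exists>v \<in> Rep_ppoint P. dot3 b v = 0}"
    using assms(2) unfolding is_line_def by blast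
  have n0: "cross3 a b \<noteq> (0,0,0)"
  proof
    assume "cross3 a b = (0,0,0)"
    then obtain c where c: "b = sc3 c a" using cross_zero a(1) by blast
    then have "c \<noteq> 0" using b(1) by (auto simp: sc3_zero)
    then have "L = M" using a b c by (auto simp: dot3_sc3)
    then show False using assms(3) by simp
  qed
  have key: "Rep_ppoint R = proj_class (cross3 a b)" if "R \<in> L" "R \<in> M" for R
  proof -
    obtain v where v: "v \<noteq> (0,0,0)" "Rep_ppoint R = proj_class v"
      using Rep_ppoint[of R] by auto
    have "dot3 a v = 0" "dot3 b v = 0" using that a b mem_line[OF v(2)] by auto
    then obtain c where c: "v = sc3 c (cross3 a b)" using cross_zero[OF n0] cross_triple by blast
    then have "c \<noteq> 0" using v(1) by (auto simp: sc3_zero)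
    then show ?thesis using v(2) c proj_class_sc3 by metis
  qed
  have "Rep_ppoint P = Rep_ppoint Q" using key[of P] key[of Q] assms(4-7) by simp
  then show ?thesis by (simp only: Rep_ppoint_inject)
qed


lemma dc_unfold:
  assumes "defines_config X d s Xs Ls"
  shows "config_type d s" "X = (\<Union>i\<in>{1..s}. Xs i)"
    "\<And>i. i\<in>{1..s} \<Longrightarrow> is_line (Ls i)" "\<And>i. i\<in>{1..s} \<Longrightarrow> Xs i \<subseteq> X"
    "\<And>i. i\<in>{1..s} \<Longrightarrow> finite (Xs i)" "\<And>i. i\<in>{1..s} \<Longrightarrow> card (Xs i) = d i"
    "\<And>i. i\<in>{1..s} \<Longrightarrow> Xs i \<subseteq> Ls i" "inj_on Ls {1..s}"
    "\<And>i j. i\<in>{1..s} \<Longrightarrow> j\<in>{1..s} \<Longrightarrow> j < i \<Longrightarrow> Ls i \<inter> Xs j = {}"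
  using assms unfolding defines_config_def by auto

lemma d_growth:
  assumes "config_type d s" "1 \<le> i" "i \<le> j" "j \<le> s"
  shows "d i + (j - i) \<le> d j"
  using assms(3,4)
proof (induction j)
  case 0 then show ?case using assms(2) by simp
next
  case (Suc j)
  show ?case
  proof (cases "i = Suc j")
    case True then show ?thesis by simp
  next
    case False
    then have "i \<le> j" using Suc.prems by simp
    then have "d i + (j - i) \<le> d j" using Suc by simp
    moreover have "d j < d (Suc j)" using assms(1,2) \<open>i \<le> j\<close> Suc.prems
      unfolding config_type_def by auto
    ultimately show ?thesis using \<open>i \<le> j\<close> by simp
  qed
qed

lemma line_decomp:
  assumes dc: "defines_config X d s Xs Ls" and i: "1 \<le> i" "i \<le> s"
  shows "Ls i \<inter> X = Xs i \<union> (\<Union>j\<in>{i<..s}. Ls i \<inter> Xs j)"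
proof -
  note D = dc_unfold[OF dc]
  have "Ls i \<inter> X = (\<Union>j\<in>{1..s}. Ls i \<inter> Xs j)" using D(2) by blast
  also have "\<dots> = Xs i \<union> (\<Union>j\<in>{i<..s}. Ls i \<inter> Xs j)"
  proof (intro set_eqI iffI)
    fix x assume "x \<in> (\<Union>j\<in>{1..s}. Ls i \<inter> Xs j)"
    then obtain j where j: "j \<in> {1..s}" "x \<in> Ls i" "x \<in> Xs j" by blast
    have "\<not> j < i" using D(9)[of i j] j i by auto
    then show "x \<in> Xs i \<union> (\<Union>j\<in>{i<..s}. Ls i \<inter> Xs j)" using j by (cases "j = i") auto
  next
    fix x assume "x \<in> Xs i \<union> (\<Union>j\<in>{i<..s}. Ls i \<inter> Xs j)"
    then show "x \<in> (\<Union>j\<in>{1..s}. Ls i \<inter> Xs j)" using D(7)[of i] i by auto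
  qed
  finally show ?thesis .
qed

lemma meet_le1:
  assumes dc: "defines_config X d s Xs Ls" and ij: "i \<in> {1..s}" "j \<in> {1..s}" "i \<noteq> j"
  shows "card (Ls i \<inter> Xs j) \<le> 1"
proof -
  note D = dc_unfold[OF dc]
  have ne: "Ls i \<noteq> Ls j" using D(8) ij unfolding inj_on_def by blast
  have "finite (Ls i \<inter> Xs j)" using D(5)[OF ij(2)] by simp
  moreover have "\<forall>a\<in>Ls i \<inter> Xs j. \<forall>b\<in>Ls i \<inter> Xs j. a = b"
    using lines_meet[OF D(3)[OF ij(1)] D(3)[OF ij(2)] ne] D(7)[OF ij(2)] by blast
  ultimately show ?thesis using card_le_Suc0_iff_eq by (metis One_nat_def)
qed

lemma count_bound:
  assumes dc: "defines_config X d s Xs Ls" and i: "1 \<le> i" "i \<le> s"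
  shows "card (Ls i \<inter> X) \<le> d i + (\<Sum>j\<in>{i<..s}. card (Ls i \<inter> Xs j))"
    "(\<Sum>j\<in>{i<..s}. card (Ls i \<inter> Xs j)) \<le> s - i"
    "card (Ls i \<inter> X) \<le> d s"
proof -
  note D = dc_unfold[OF dc]
  have "card (Ls i \<inter> X) \<le> card (Xs i) + card (\<Union>j\<in>{i<..s}. Ls i \<inter> Xs j)"
    unfolding line_decomp[OF dc i] by (rule card_Un_le)
  also have "card (\<Union>j\<in>{i<..s}. Ls i \<inter> Xs j) \<le> (\<Sum>j\<in>{i<..s}. card (Ls i \<inter> Xs j))"
    by (rule card_UN_le) simp
  finally show A: "card (Ls i \<inter> X) \<le> d i + (\<Sum>j\<in>{i<..s}. card (Ls i \<inter> Xs j))"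
    using D(6)[of i] i by simp
  have "(\<Sum>j\<in>{i<..s}. card (Ls i \<inter> Xs j)) \<le> (\<Sum>j\<in>{i<..s}. 1)"
    by (rule sum_mono) (use meet_le1[OF dc] i in auto)
  then show B: "(\<Sum>j\<in>{i<..s}. card (Ls i \<inter> Xs j)) \<le> s - i" by simp
  show "card (Ls i \<inter> X) \<le> d s" using A B d_growth[OF D(1) i(1) i(2) order.refl] by linarith
qed

lemma full_props:
  assumes dc: "defines_config X d s Xs Ls" and i: "1 \<le> i" "i \<le> s"
    and full: "card (Ls i \<inter> X) = d s"
  shows "\<And>j. j \<in> {i<..s} \<Longrightarrow> card (Ls i \<inter> Xs j) = 1"
    "\<And>k. i \<le> k \<Longrightarrow> k < s \<Longrightarrow> d (Suc k) = Suc (d k)"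
proof -
  note D = dc_unfold[OF dc]
  note CB = count_bound[OF dc i]
  have g: "d i + (s - i) \<le> d s" using d_growth[OF D(1) i(1) i(2) order.refl] .
  let ?S = "\<Sum>j\<in>{i<..s}. card (Ls i \<inter> Xs j)"
  have Seq: "?S = s - i" and deq: "d i + (s - i) = d s" using CB(1,2) full g by linarith+
  show "card (Ls i \<inter> Xs j) = 1" if j: "j \<in> {i<..s}" for j
  proof (rule ccontr)
    assume ne: "card (Ls i \<inter> Xs j) \<noteq> 1"
    have le: "card (Ls i \<inter> Xs j) \<le> 1" using meet_le1[OF dc, of i j] i j by auto
    have "?S = card (Ls i \<inter> Xs j) + (\<Sum>j'\<in>{i<..s} - {j}. card (Ls i \<inter> Xs j'))"
      using j by (simp add: sum.remove)
    also have "(\<Sum>j'\<in>{i<..s} - {j}. card (Ls i \<inter> Xs j')) \<le> (\<Sum>j'\<in>{i<..s} - {j}. 1)"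
      by (rule sum_mono) (use meet_le1[OF dc] i in auto)
    also have "(\<Sum>j'\<in>{i<..s} - {j}. (1::nat)) = s - i - 1" using j by simp
    finally show False using ne le Seq j by auto
  qed
  show "d (Suc k) = Suc (d k)" if k: "i \<le> k" "k < s" for k
  proof -
    have "d i + (k - i) \<le> d k" using d_growth[OF D(1) i(1) k(1)] k by simp
    moreover have "d (Suc k) + (s - Suc k) \<le> d s" using d_growth[OF D(1) _ _ order.refl] i k by simp
    moreover have "d k < d (Suc k)" using D(1) i k unfolding config_type_def by auto
    ultimately show ?thesis using deq k by linarith
  qed
qed


lemma move_line:
  assumes dc: "defines_config X d s Xs Ls" and i: "1 \<le> i" "i < s"
    and full: "card (Ls i \<inter> X) = d s"
  shows "\<exists>Xs' Ls'. defines_config X d s Xs' Ls' \<and> Ls' s = Ls i \<and>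
           (\<forall>k. i \<le> k \<and> k < s \<longrightarrow> Ls' k = Ls (Suc k))"
proof -
  note D = dc_unfold[OF dc]
  have one: "\<And>j. j \<in> {i<..s} \<Longrightarrow> card (Ls i \<inter> Xs j) = 1"
    and dstep: "\<And>k. i \<le> k \<Longrightarrow> k < s \<Longrightarrow> d (Suc k) = Suc (d k)"
    using full_props[OF dc i(1) _ full] i by auto
  define \<sigma> where "\<sigma> k = (if k < i then k else if k < s then Suc k else i)" for k
  define Ls' where "Ls' k = Ls (\<sigma> k)" for k
  define Xs' where "Xs' k = (if k < i then Xs k else if k < s then Xs (Suc k) - Ls i else Ls i \<inter> X)" for k
  have \<sigma>_in: "\<sigma> k \<in> {1..s}" if "k \<in> {1..s}" for k using that i by (auto simp: \<sigma>_def)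
  have \<sigma>_inj: "inj_on \<sigma> {1..s}" using i unfolding inj_on_def \<sigma>_def by auto
  have fin: "finite X" using D(2) D(5) by auto
  have P1: "X = (\<Union>k\<in>{1..s}. Xs' k)"
  proof (intro set_eqI iffI)
    fix x assume "x \<in> X"
    then obtain j where j: "j \<in> {1..s}" "x \<in> Xs j" using D(2) by blast
    show "x \<in> (\<Union>k\<in>{1..s}. Xs' k)"
    proof (cases "j < i")
      case True then show ?thesis using j by (auto simp: Xs'_def intro!: bexI[of _ j])
    next
      case False
      show ?thesis
      proof (cases "j = i \<or> x \<in> Ls i")
        case True
        then have "x \<in> Xs' s" using j \<open>x \<in> X\<close> D(7)[of i] i by (auto simp: Xs'_def)
        then show ?thesis using i by auto
      next
        case F2: False
        then have "x \<in> Xs' (j - 1)" using j False by (auto simp: Xs'_def)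
        moreover have "j - 1 \<in> {1..s}" using j False F2 i by auto
        ultimately show ?thesis by blast
      qed
    qed
  next
    fix x assume "x \<in> (\<Union>k\<in>{1..s}. Xs' k)"
    then obtain k where k: "k \<in> {1..s}" "x \<in> Xs' k" by blast
    show "x \<in> X"
    proof (cases "k < i")
      case True then show ?thesis using k D(4)[of k] by (auto simp: Xs'_def)
    next
      case False
      then show ?thesis using k D(4)[of "Suc k"] by (auto simp: Xs'_def split: if_splits)
    qed
  qed
  have P2: "is_line (Ls' k) \<and> Xs' k \<subseteq> X \<and> finite (Xs' k) \<and> card (Xs' k) = d k \<and> Xs' k \<subseteq> Ls' k"
    if k: "k \<in> {1..s}" for k
  proof -
    have "is_line (Ls' k)" using D(3)[OF \<sigma>_in[OF k]] by (simp add: Ls'_def)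
    moreover have sub: "Xs' k \<subseteq> X" using P1 k by blast
    moreover have "finite (Xs' k)" using sub fin finite_subset by blast
    moreover have "card (Xs' k) = d k \<and> Xs' k \<subseteq> Ls' k"
    proof (cases "k < i")
      case True then show ?thesis using D(6,7)[OF k] by (simp add: Xs'_def Ls'_def \<sigma>_def)
    next
      case False
      show ?thesis
      proof (cases "k < s")
        case True
        have k1: "Suc k \<in> {1..s}" using True by simp
        have "card (Xs (Suc k) - Ls i) = card (Xs (Suc k)) - card (Xs (Suc k) \<inter> Ls i)"
          by (rule card_Diff_subset_Int) (use D(5)[OF k1] in simp)
        also have "Xs (Suc k) \<inter> Ls i = Ls i \<inter> Xs (Suc k)" by blast
        also have "card (Ls i \<inter> Xs (Suc k)) = 1" using one[of "Suc k"] False True by simp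
        finally have "card (Xs (Suc k) - Ls i) = d k"
          using D(6)[OF k1] dstep[of k] False True by simp
        then show ?thesis using False True D(7)[OF k1] by (auto simp: Xs'_def Ls'_def \<sigma>_def)
      next
        case F2: False
        then have "k = s" using k by simp
        then show ?thesis using False F2 full i by (auto simp: Xs'_def Ls'_def \<sigma>_def)
      qed
    qed
    ultimately show ?thesis by blast
  qed
  have P3: "inj_on Ls' {1..s}"
  proof -
    have "inj_on (Ls \<circ> \<sigma>) {1..s}"
      by (rule comp_inj_on[OF \<sigma>_inj]) (rule inj_on_subset[OF D(8)], use \<sigma>_in in blast)
    moreover have "Ls' = Ls \<circ> \<sigma>" by (rule ext) (simp add: Ls'_def)
    ultimately show ?thesis by simp
  qed
  have P4: "Ls' k \<inter> Xs' k' = {}" if k: "k \<in> {1..s}" "k' \<in> {1..s}" "k' < k" for k k'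
  proof (cases "k < i")
    case True then have "k' < i" using k by simp
    then show ?thesis using D(9)[OF k] True by (simp add: Xs'_def Ls'_def \<sigma>_def)
  next
    case F1: False
    show ?thesis
    proof (cases "k < s")
      case T2: True
      have k1: "Suc k \<in> {1..s}" using T2 by simp
      show ?thesis
      proof (cases "k' < i")
        case True then show ?thesis using D(9)[OF k1 k(2)] k F1 T2 by (simp add: Xs'_def Ls'_def \<sigma>_def)
      next
        case F3: False
        have "Ls (Suc k) \<inter> Xs (Suc k') = {}" using D(9)[OF k1, of "Suc k'"] k by simp
        then show ?thesis using F3 F1 T2 k by (auto simp: Xs'_def Ls'_def \<sigma>_def)
      qed
    next
      case F2: False
      show ?thesis
      proof (cases "k' < i")
        case True then show ?thesis using D(9)[of i k'] k i F2 F1 by (simp add: Xs'_def Ls'_def \<sigma>_def)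
      next
        case F3: False
        then show ?thesis using F2 k by (auto simp: Xs'_def Ls'_def \<sigma>_def)
      qed
    qed
  qed
  have "defines_config X d s Xs' Ls'"
    unfolding defines_config_def using D(1) P1 P2 P3 P4 by blast
  moreover have "Ls' s = Ls i" using i by (simp add: Ls'_def \<sigma>_def)
  moreover have "\<forall>k. i \<le> k \<and> k < s \<longrightarrow> Ls' k = Ls (Suc k)" by (simp add: Ls'_def \<sigma>_def)
  ultimately show ?thesis by blast
qed


lemma last_full:
  assumes dc: "defines_config X d s Xs Ls" and s: "1 \<le> s"
  shows "card (Ls s \<inter> X) = d s"
proof -
  have "Ls s \<inter> X = Xs s" using line_decomp[OF dc s order.refl] by simp
  then show ?thesis using dc_unfold(6)[OF dc, of s] s by simp
qed

theorem corollary2p11: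
  fixes X :: "'k::field ppoint set" and d :: "nat \<Rightarrow> nat" and s :: nat
  assumes "alg_closed TYPE('k)"
    and "k_configuration X d s"
    and "s \<ge> 2"
  shows "\<exists>Xs Ls r. defines_config X d s Xs Ls \<and> 1 \<le> r \<and> r \<le> s \<and>
           (\<forall>j. j \<le> r - 1 \<longrightarrow> card (Ls (s - j) \<inter> X) = d s) \<and>
           (\<forall>j. r \<le> j \<and> j \<le> s - 1 \<longrightarrow> card (Ls (s - j) \<inter> X) < d s)"
proof -
  obtain Xs0 Ls0 where dc0: "defines_config X d s Xs0 Ls0"
    using assms(2) unfolding k_configuration_def by blast
  define Pr where "Pr r \<longleftrightarrow> (\<exists>Xs Ls. defines_config X d s Xs Ls \<and> 1 \<le> r \<and> r \<le> s \<and>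
           (\<forall>j. j \<le> r - 1 \<longrightarrow> card (Ls (s - j) \<inter> X) = d s))" for r
  have "\<forall>j. j \<le> 1 - 1 \<longrightarrow> card (Ls0 (s - j) \<inter> X) = d s"
    using last_full[OF dc0] assms(3) by simp
  moreover have "(1::nat) \<le> s" using assms(3) by simp
  ultimately have p1: "Pr 1" unfolding Pr_def using dc0 by blast
  have bd: "\<forall>y. Pr y \<longrightarrow> y \<le> s"
  proof (intro allI impI)
    fix y assume "Pr y" then show "y \<le> s" unfolding Pr_def by (elim exE conjE)
  qed
  have "\<exists>x. Pr x \<and> (\<forall>y. Pr y \<longrightarrow> y \<le> x)" by (rule Nat.ex_has_greatest_nat[OF p1 bd])
  then obtain r where r: "Pr r" and rmax0: "\<forall>y. Pr y \<longrightarrow> y \<le> r" by (elim exE conjE)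
  have rmax: "\<And>y. Pr y \<Longrightarrow> y \<le> r" using rmax0 by blast
  from r obtain Xs Ls where dc: "defines_config X d s Xs Ls" and r1: "1 \<le> r" "r \<le> s"
    and suf: "\<forall>j. j \<le> r - 1 \<longrightarrow> card (Ls (s - j) \<inter> X) = d s"
    unfolding Pr_def by blast
  have rest: "card (Ls (s - j) \<inter> X) < d s" if j: "r \<le> j" "j \<le> s - 1" for j
  proof (rule ccontr)
    assume "\<not> card (Ls (s - j) \<inter> X) < d s"
    then have full: "card (Ls (s - j) \<inter> X) = d s"
      using count_bound(3)[OF dc, where i="s - j"] j r1 by linarith
    show False
    proof (cases "j = r")
      case True
      have "\<forall>j'. j' \<le> Suc r - 1 \<longrightarrow> card (Ls (s - j') \<inter> X) = d s"
      proof (intro allI impI)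
        fix j' assume j': "j' \<le> Suc r - 1"
        show "card (Ls (s - j') \<inter> X) = d s"
        proof (cases "j' = r")
          case True then show ?thesis using full \<open>j = r\<close> by simp
        next
          case False then have "j' \<le> r - 1" using j' by simp
          then show ?thesis using suf by blast
        qed
      qed
      moreover have "Suc r \<le> s" using j True r1 by linarith
      ultimately have "Pr (Suc r)" unfolding Pr_def using dc by (intro exI[of _ Xs] exI[of _ Ls] conjI) auto
      then show False using rmax[of "Suc r"] by simp
    next
      case False
      let ?i = "s - j"
      have i: "1 \<le> ?i" "?i < s" using j r1 by auto
      obtain Xs' Ls' where dc': "defines_config X d s Xs' Ls'" and Ls's: "Ls' s = Ls ?i"
        and Ls'k: "\<forall>k. ?i \<le> k \<and> k < s \<longrightarrow> Ls' k = Ls (Suc k)"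
        using move_line[OF dc i full] by blast
      have "\<forall>j'. j' \<le> Suc r - 1 \<longrightarrow> card (Ls' (s - j') \<inter> X) = d s"
      proof (intro allI impI)
        fix j' assume j'0: "j' \<le> Suc r - 1"
        then have j': "j' \<le> r" by simp
        show "card (Ls' (s - j') \<inter> X) = d s"
        proof (cases "j' = 0")
          case True then show ?thesis using Ls's full by simp
        next
          case F0: False
          have "?i \<le> s - j' \<and> s - j' < s" using F0 j' j \<open>j \<noteq> r\<close> r1 by linarith
          then have "Ls' (s - j') = Ls (Suc (s - j'))" using Ls'k by blast
          also have "Suc (s - j') = s - (j' - 1)" using F0 j' r1 by linarith
          finally have e: "Ls' (s - j') = Ls (s - (j' - 1))" .
          have "j' - 1 \<le> r - 1" using j' by linarith
          then show ?thesis using suf e by simp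
        qed
      qed
      moreover have "Suc r \<le> s" using j False r1 by linarith
      ultimately have "Pr (Suc r)" unfolding Pr_def using dc' by (intro exI[of _ Xs'] exI[of _ Ls'] conjI) auto
      then show False using rmax[of "Suc r"] by simp
    qed
  qed
  show ?thesis using dc r1 suf rest by blast
qed

end
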